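(* Assume: (H') for every bounded interval $J\subset I$ there exist a positive $\psi\in C^2(\mathbb R^d)$ with $\psi(x)\to+\infty$ as $|x|\to\infty$ and $\lambda\in\mathbb R$ with $\mathcal A_{-c}(t)\psi-\lambda\psi\le0$ on $J\times\mathbb R^d$; and (H'') for every bounded interval $J\subset I$ there exist a positive $\varphi_J\in C^2(\mathbb R^d)$ with $\varphi_J(x)\to+\infty$ as $|x|\to\infty$ and $M_J>0$ with $\mathcal A(t)\varphi_J\le M_J$ on $J\times\mathbb R^d$. Then for every bounded interval $J\subset I$ and every $R>0$ the family of measures $\{g_{t,s}(x,dy):(t,s,x)\in\Lambda_J\times\overline{B(0,R)}\}$ is tight, i.e., for every $\varepsilon>0$ there is $M>0$ with $g_{t,s}(x,\mathbb R^d\setminus B(0,M))\le\varepsilon$ for all $(t,s,x)\in\Lambda_J\times\overline{B(0,R)}$.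
   Context: Let $d\ge1$, $\alpha\in(0,1)$, $I\subseteq\mathbb R$ either $\mathbb R$ or a right half-line; $\Lambda_J=\{(t,s)\in J\times J:t\ge s\}$. For $t\in I$, $(\mathcal A(t)\psi)(x)=\sum_{i,j}q_{ij}(t,x)D_{ij}\psi(x)+\sum_ib_i(t,x)D_i\psi(x)-c(t,x)\psi(x)$, with: $q_{ij},b_i,c\in C^{\alpha/2,\alpha}_{\rm loc}(I\times\mathbb R^d)$; $\inf c>-\infty$; $Q=(q_{ij})$ symmetric with $\langle Q(t,x)\xi,\xi\rangle\ge\eta(t,x)|\xi|^2$, $\inf\eta>0$; for every bounded interval $J\subset I$ there are positive $\phi_J\in C^2(\mathbb R^d)$ with $\phi_J\to+\infty$ at infinity and $\lambda_J$ with $\mathcal A(t)\phi_J\le\lambda_J\phi_J$ on $J\times\mathbb R^d$. $\mathcal A_{-c}(t)=\mathcal A(t)+c(t,\cdot)$. $G(t,s)$ is the evolution operator on $C_b(\mathbb R^d)$: $G(t,s)f=u_f(t,\cdot)$, $u_f$ the unique solution (bounded on strips, in $C([s,\infty)\times\mathbb R^d)\cap C^{1+\alpha/2,2+\alpha}_{\rm loc}((s,\infty)\times\mathbb R^d)$) of $D_tu=\mathcal A(t)u$, $u(s)=f$. Its Green function $g$ is positive with $(G(t,s)f)(x)=\int g(t,s,x,y)f(y)dy$; $g_{t,s}(x,dy)=g(t,s,x,y)dy$ for $t>s$, $g_{t,t}(x,dy)=\delta_x$. *)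

theory Defs
  imports "HOL-Analysis.Analysis" "HOL-Probability.Probability"
begin

definition pd :: "'d::finite \<Rightarrow> (real^'d \<Rightarrow> real) \<Rightarrow> real^'d \<Rightarrow> real" where
  "pd i f x = deriv (\<lambda>h. f (x + h *\<^sub>R axis i 1)) 0"

definition has_pd :: "'d::finite \<Rightarrow> (real^'d \<Rightarrow> real) \<Rightarrow> real^'d \<Rightarrow> bool" where
  "has_pd i f x \<longleftrightarrow> (\<lambda>h. f (x + h *\<^sub>R axis i 1)) differentiable (at 0)"

definition C2 :: "(real^'d::finite \<Rightarrow> real) \<Rightarrow> bool" where
  "C2 f \<longleftrightarrow> continuous_on UNIV f
     \<and> (\<forall>i x. has_pd i f x) \<and> (\<forall>i. continuous_on UNIV (pd i f))
     \<and> (\<forall>i j x. has_pd i (pd j f) x) \<and> (\<forall>i j. continuous_on UNIV (pd i (pd j f)))"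

definition hoelder_loc :: "real \<Rightarrow> (real \<times> (real^'d::finite)) set \<Rightarrow> (real \<Rightarrow> real^'d \<Rightarrow> real) \<Rightarrow> bool" where
  "hoelder_loc \<alpha> S f \<longleftrightarrow> (\<forall>K. compact K \<and> K \<subseteq> S \<longrightarrow>
     (\<exists>L. \<forall>t x s y. (t, x) \<in> K \<and> (s, y) \<in> K \<longrightarrow>
        \<bar>f t x - f s y\<bar> \<le> L * (\<bar>t - s\<bar> powr (\<alpha> / 2) + norm (x - y) powr \<alpha>)))"

definition dt :: "(real \<Rightarrow> real^'d::finite \<Rightarrow> real) \<Rightarrow> real \<Rightarrow> real^'d \<Rightarrow> real" where
  "dt u t x = deriv (\<lambda>\<tau>. u \<tau> x) t"

definition C12_hoelder_loc :: "real \<Rightarrow> (real \<times> (real^'d::finite)) set \<Rightarrow> (real \<Rightarrow> real^'d \<Rightarrow> real) \<Rightarrow> bool" where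
  "C12_hoelder_loc \<alpha> S u \<longleftrightarrow>
     (\<forall>(t, x) \<in> S. (\<lambda>\<tau>. u \<tau> x) differentiable (at t)
        \<and> (\<forall>i. has_pd i (u t) x) \<and> (\<forall>i j. has_pd i (pd j (u t)) x))
     \<and> continuous_on S (\<lambda>(t, x). u t x)
     \<and> continuous_on S (\<lambda>(t, x). dt u t x)
     \<and> (\<forall>i. continuous_on S (\<lambda>(t, x). pd i (u t) x))
     \<and> (\<forall>i j. continuous_on S (\<lambda>(t, x). pd i (pd j (u t)) x))
     \<and> hoelder_loc \<alpha> S (dt u)
     \<and> (\<forall>i j. hoelder_loc \<alpha> S (\<lambda>t x. pd i (pd j (u t)) x))"

text \<open>The operator A(t) and A_{-c}(t) = A(t) + c(t,.) applied to psi at x.\<close>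
definition Aop :: "(real \<Rightarrow> real^'d \<Rightarrow> real^'d^'d) \<Rightarrow> (real \<Rightarrow> real^'d \<Rightarrow> real^'d)
    \<Rightarrow> (real \<Rightarrow> real^'d \<Rightarrow> real) \<Rightarrow> real \<Rightarrow> (real^'d::finite \<Rightarrow> real) \<Rightarrow> real^'d \<Rightarrow> real" where
  "Aop Q b c t \<psi> x = (\<Sum>i\<in>UNIV. \<Sum>j\<in>UNIV. Q t x $ i $ j * pd i (pd j \<psi>) x)
      + (\<Sum>i\<in>UNIV. b t x $ i * pd i \<psi> x) - c t x * \<psi> x"

definition Aop_mc :: "(real \<Rightarrow> real^'d \<Rightarrow> real^'d^'d) \<Rightarrow> (real \<Rightarrow> real^'d \<Rightarrow> real^'d)
    \<Rightarrow> (real \<Rightarrow> real^'d \<Rightarrow> real) \<Rightarrow> real \<Rightarrow> (real^'d::finite \<Rightarrow> real) \<Rightarrow> real^'d \<Rightarrow> real" where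
  "Aop_mc Q b c t \<psi> x = Aop Q b c t \<psi> x + c t x * \<psi> x"

definition bounded_interval :: "real set \<Rightarrow> bool" where
  "bounded_interval J \<longleftrightarrow> is_interval J \<and> bounded J"

definition Cb :: "(real^'d::finite \<Rightarrow> real) \<Rightarrow> bool" where
  "Cb f \<longleftrightarrow> continuous_on UNIV f \<and> bounded (range f)"

definition is_cauchy_solution ::
  "real \<Rightarrow> (real \<Rightarrow> real^'d \<Rightarrow> real^'d^'d) \<Rightarrow> (real \<Rightarrow> real^'d \<Rightarrow> real^'d)
    \<Rightarrow> (real \<Rightarrow> real^'d \<Rightarrow> real) \<Rightarrow> real \<Rightarrow> (real^'d::finite \<Rightarrow> real)
    \<Rightarrow> (real \<Rightarrow> real^'d \<Rightarrow> real) \<Rightarrow> bool" where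
  "is_cauchy_solution \<alpha> Q b c s f u \<longleftrightarrow>
     continuous_on ({s..} \<times> UNIV) (\<lambda>(t, x). u t x)
     \<and> (\<forall>T. bounded ((\<lambda>(t, x). u t x) ` ({s..T} \<times> UNIV)))
     \<and> C12_hoelder_loc \<alpha> ({s<..} \<times> UNIV) u
     \<and> (\<forall>t x. t > s \<longrightarrow> dt u t x = Aop Q b c t (u t) x)
     \<and> u s = f"

definition gmeas :: "(real \<Rightarrow> real \<Rightarrow> real^'d \<Rightarrow> real^'d \<Rightarrow> real) \<Rightarrow> real \<Rightarrow> real \<Rightarrow> real^'d::finite
    \<Rightarrow> (real^'d) measure" where
  "gmeas g t s x = (if t = s then return lborel x else density lborel (\<lambda>y. ennreal (g t s x y)))"

end

theory Submission
  imports Defs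
begin


lemma pd_deriv0:
  assumes "has_pd i F y"
  shows "((\<lambda>h. F (y + h *\<^sub>R axis i 1)) has_real_derivative pd i F y) (at 0)"
  using assms unfolding has_pd_def pd_def
  using DERIV_deriv_iff_real_differentiable by blast

lemma pd_deriv_at:
  assumes "has_pd i F (y + \<tau> *\<^sub>R axis i 1)"
  shows "((\<lambda>h. F (y + h *\<^sub>R axis i 1)) has_real_derivative pd i F (y + \<tau> *\<^sub>R axis i 1)) (at \<tau>)"
proof -
  have "((\<lambda>h. F ((y + \<tau> *\<^sub>R axis i 1) + h *\<^sub>R axis i 1)) has_real_derivative pd i F (y + \<tau> *\<^sub>R axis i 1)) (at 0)"
    by (rule pd_deriv0[OF assms])
  also have "(\<lambda>h. F ((y + \<tau> *\<^sub>R axis i 1) + h *\<^sub>R axis i 1)) = (\<lambda>h. (\<lambda>h. F (y + h *\<^sub>R axis i 1)) (h + \<tau>))"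
    by (simp add: algebra_simps scaleR_add_left)
  finally show ?thesis using DERIV_shift[of "\<lambda>h. F (y + h *\<^sub>R axis i 1)" _ 0 \<tau>] by simp
qed

lemma mvt_sym:
  fixes G :: "real \<Rightarrow> real"
  assumes "\<And>\<tau>. (G has_real_derivative G' \<tau>) (at \<tau>)"
  shows "\<exists>z. \<bar>z\<bar> \<le> \<bar>b\<bar> \<and> G b - G 0 = b * G' z"
proof (cases "b = 0")
  case True then show ?thesis by auto
next
  case False
  show ?thesis
  proof (cases "b > 0")
    case True
    from MVT2[of 0 b G G'] True assms obtain z where "0 < z" "z < b" "G b - G 0 = (b - 0) * G' z" by blast
    then show ?thesis by (intro exI[of _ z]) auto
  next
    case False2: False
    with False have "b < 0" by auto
    from MVT2[of b 0 G G'] this assms obtain z where "b < z" "z < 0" "G 0 - G b = (0 - b) * G' z" by blast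
    then show ?thesis by (intro exI[of _ z]) (auto simp: algebra_simps)
  qed
qed

lemma eventually_at0_neq: "\<forall>\<^sub>F h in at (0::real). h \<noteq> 0"
  by (simp add: eventually_at_filter)

lemma dir_deriv_aux:
  fixes F :: "real^'d::finite \<Rightarrow> real"
  assumes hp: "\<And>i y. has_pd i F y" and cp: "\<And>i. continuous_on UNIV (pd i F)"
  assumes "finite S"
  shows "\<And>\<xi> x. (\<forall>i. i \<notin> S \<longrightarrow> \<xi>$i = 0) \<Longrightarrow>
     ((\<lambda>h. F (x + h *\<^sub>R \<xi>)) has_real_derivative (\<Sum>i\<in>S. \<xi>$i * pd i F x)) (at 0)"
  using assms(3)
proof (induction S)
  case empty
  then have "\<xi> = 0" by (simp add: vec_eq_iff)
  then show ?case by simp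
next
  case (insert k S \<xi> x)
  define e where "e = (axis k 1 :: real^'d)"
  define \<xi>' where "\<xi>' = \<xi> - (\<xi>$k) *\<^sub>R e"
  have sup': "\<forall>i. i \<notin> S \<longrightarrow> \<xi>'$i = 0"
    using insert.prems by (auto simp: \<xi>'_def e_def axis_def)
  have IH: "((\<lambda>h. F (x + h *\<^sub>R \<xi>')) has_real_derivative (\<Sum>i\<in>S. \<xi>$i * pd i F x)) (at 0)"
  proof -
    have "(\<Sum>i\<in>S. \<xi>'$i * pd i F x) = (\<Sum>i\<in>S. \<xi>$i * pd i F x)"
      using insert.hyps by (intro sum.cong) (auto simp: \<xi>'_def e_def axis_def)
    then show ?thesis using insert.IH[OF sup', of x] by simp
  qed
  define A where "A h = F (x + h *\<^sub>R \<xi>) - F (x + h *\<^sub>R \<xi>')" for h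
  have mv: "\<exists>z. \<bar>z\<bar> \<le> \<bar>h * \<xi>$k\<bar> \<and> A h = (h * \<xi>$k) * pd k F (x + h *\<^sub>R \<xi>' + z *\<^sub>R e)" for h
  proof -
    have d: "((\<lambda>\<tau>. F ((x + h *\<^sub>R \<xi>') + \<tau> *\<^sub>R e)) has_real_derivative pd k F ((x + h *\<^sub>R \<xi>') + \<tau> *\<^sub>R e)) (at \<tau>)" for \<tau>
      unfolding e_def by (rule pd_deriv_at[OF hp])
    from mvt_sym[OF d, of "h * \<xi>$k"] obtain z where z: "\<bar>z\<bar> \<le> \<bar>h * \<xi>$k\<bar>"
      "F ((x + h *\<^sub>R \<xi>') + (h * \<xi>$k) *\<^sub>R e) - F ((x + h *\<^sub>R \<xi>') + 0 *\<^sub>R e) = (h * \<xi>$k) * pd k F ((x + h *\<^sub>R \<xi>') + z *\<^sub>R e)"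
      by blast
    have "(x + h *\<^sub>R \<xi>') + (h * \<xi>$k) *\<^sub>R e = x + h *\<^sub>R \<xi>"
      by (simp add: \<xi>'_def algebra_simps)
    with z show ?thesis unfolding A_def by (intro exI[of _ z]) auto
  qed
  then obtain zf where zf: "\<And>h. \<bar>zf h\<bar> \<le> \<bar>h * \<xi>$k\<bar> \<and> A h = (h * \<xi>$k) * pd k F (x + h *\<^sub>R \<xi>' + zf h *\<^sub>R e)"
    by metis
  have lim0: "((\<lambda>h. x + h *\<^sub>R \<xi>' + zf h *\<^sub>R e) \<longlongrightarrow> x) (at 0)"
  proof -
    have "((\<lambda>h. h *\<^sub>R \<xi>' + zf h *\<^sub>R e) \<longlongrightarrow> 0) (at (0::real))"
    proof (rule Lim_null_comparison)
      show "\<forall>\<^sub>F h in at 0. norm (h *\<^sub>R \<xi>' + zf h *\<^sub>R e) \<le> \<bar>h\<bar> * (norm \<xi>' + \<bar>\<xi>$k\<bar>)"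
      proof (intro always_eventually allI)
        fix h :: real
        have "norm (h *\<^sub>R \<xi>' + zf h *\<^sub>R e) \<le> norm (h *\<^sub>R \<xi>') + norm (zf h *\<^sub>R e)" by (rule norm_triangle_ineq)
        also have "norm (zf h *\<^sub>R e) = \<bar>zf h\<bar>" by (simp add: e_def)
        also have "\<bar>zf h\<bar> \<le> \<bar>h\<bar> * \<bar>\<xi>$k\<bar>" using zf[of h] by (simp add: abs_mult)
        finally show "norm (h *\<^sub>R \<xi>' + zf h *\<^sub>R e) \<le> \<bar>h\<bar> * (norm \<xi>' + \<bar>\<xi>$k\<bar>)"
          by (simp add: algebra_simps)
      qed
      show "((\<lambda>h. \<bar>h\<bar> * (norm \<xi>' + \<bar>\<xi>$k\<bar>)) \<longlongrightarrow> 0) (at 0)"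
        by (auto intro!: tendsto_eq_intros)
    qed
    then have "((\<lambda>h. x + (h *\<^sub>R \<xi>' + zf h *\<^sub>R e)) \<longlongrightarrow> x + 0) (at 0)"
      by (intro tendsto_add tendsto_const)
    then show ?thesis by (simp add: add.assoc)
  qed
  have ic: "isCont (pd k F) x" using cp[of k] by (simp add: continuous_on_eq_continuous_at)
  have limA: "((\<lambda>h. (A h - A 0) / (h - 0)) \<longlongrightarrow> \<xi>$k * pd k F x) (at 0)"
  proof -
    have "((\<lambda>h. \<xi>$k * pd k F (x + h *\<^sub>R \<xi>' + zf h *\<^sub>R e)) \<longlongrightarrow> \<xi>$k * pd k F x) (at 0)"
      by (intro tendsto_mult_left isCont_tendsto_compose[OF ic lim0])
    moreover have "\<forall>\<^sub>F h in at 0. \<xi>$k * pd k F (x + h *\<^sub>R \<xi>' + zf h *\<^sub>R e) = (A h - A 0) / (h - 0)"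
      using eventually_at0_neq
    proof (rule eventually_mono)
      fix h :: real assume "h \<noteq> 0"
      then show "\<xi>$k * pd k F (x + h *\<^sub>R \<xi>' + zf h *\<^sub>R e) = (A h - A 0) / (h - 0)"
        using zf[of h] by (simp add: A_def)
    qed
    ultimately show ?thesis by (rule Lim_transform_eventually)
  qed
  then have dA: "(A has_real_derivative \<xi>$k * pd k F x) (at 0)"
    by (simp add: has_field_derivative_iff)
  have "((\<lambda>h. A h + F (x + h *\<^sub>R \<xi>')) has_real_derivative \<xi>$k * pd k F x + (\<Sum>i\<in>S. \<xi>$i * pd i F x)) (at 0)"
    by (rule DERIV_add[OF dA IH])
  moreover have "(\<lambda>h. A h + F (x + h *\<^sub>R \<xi>')) = (\<lambda>h. F (x + h *\<^sub>R \<xi>))" by (simp add: A_def)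
  ultimately show ?case using insert.hyps by simp
qed

lemma dir_deriv:
  fixes F :: "real^'d::finite \<Rightarrow> real"
  assumes hp: "\<And>i y. has_pd i F y" and cp: "\<And>i. continuous_on UNIV (pd i F)"
  shows "((\<lambda>h. F (x + h *\<^sub>R \<xi>)) has_real_derivative (\<Sum>i\<in>UNIV. \<xi>$i * pd i F (x + h0 *\<^sub>R \<xi>))) (at h0)"
proof -
  have "((\<lambda>h. F ((x + h0 *\<^sub>R \<xi>) + h *\<^sub>R \<xi>)) has_real_derivative (\<Sum>i\<in>UNIV. \<xi>$i * pd i F (x + h0 *\<^sub>R \<xi>))) (at 0)"
    by (rule dir_deriv_aux[OF hp cp]) auto
  also have "(\<lambda>h. F ((x + h0 *\<^sub>R \<xi>) + h *\<^sub>R \<xi>)) = (\<lambda>h. (\<lambda>h. F (x + h *\<^sub>R \<xi>)) (h + h0))"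
    by (simp add: algebra_simps scaleR_add_left)
  finally show ?thesis using DERIV_shift[of "\<lambda>h. F (x + h *\<^sub>R \<xi>)" _ 0 h0] by simp
qed



definition qf :: "('d::finite \<Rightarrow> 'd \<Rightarrow> real) \<Rightarrow> ('d \<Rightarrow> real) \<Rightarrow> real" where
  "qf M \<xi> = (\<Sum>i\<in>UNIV. \<Sum>j\<in>UNIV. \<xi> i * \<xi> j * M i j)"

definition dlt :: "'d \<Rightarrow> 'd \<Rightarrow> real" where "dlt k i = (if i = k then 1 else 0)"

lemma dlt_sum: "(\<Sum>i\<in>UNIV. dlt k i * Y i) = Y (k::'d::finite)"
proof -
  have "(\<Sum>i\<in>UNIV. dlt k i * Y i) = (\<Sum>i\<in>UNIV. if k = i then Y i else 0)"
    by (intro sum.cong) (auto simp: dlt_def)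
  also have "\<dots> = Y k" by (simp add: sum.delta)
  finally show ?thesis .
qed

lemma qf_expand:
  "qf P (\<lambda>i. \<xi> i + \<tau> * dlt k i) =
     qf P \<xi> + \<tau> * (\<Sum>i\<in>UNIV. \<xi> i * P i k) + \<tau> * (\<Sum>j\<in>UNIV. \<xi> j * P k j) + \<tau>\<^sup>2 * P k k"
proof -
  have pw: "(\<xi> i + \<tau> * dlt k i) * (\<xi> j + \<tau> * dlt k j) * P i j =
     \<xi> i * \<xi> j * P i j + \<tau> * (dlt k i * (\<xi> j * P i j)) + \<tau> * (dlt k j * (\<xi> i * P i j))
     + \<tau>\<^sup>2 * (dlt k i * (dlt k j * P i j))" for i j
    by (simp add: algebra_simps power2_eq_square)
  have "qf P (\<lambda>i. \<xi> i + \<tau> * dlt k i) = qf P \<xi>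
      + \<tau> * (\<Sum>i\<in>UNIV. dlt k i * (\<Sum>j\<in>UNIV. \<xi> j * P i j))
      + \<tau> * (\<Sum>i\<in>UNIV. \<Sum>j\<in>UNIV. dlt k j * (\<xi> i * P i j))
      + \<tau>\<^sup>2 * (\<Sum>i\<in>UNIV. dlt k i * (\<Sum>j\<in>UNIV. dlt k j * P i j))"
    unfolding qf_def pw by (simp add: sum.distrib sum_distrib_left)
  also have "(\<Sum>i\<in>UNIV. \<Sum>j\<in>UNIV. dlt k j * (\<xi> i * P i j)) = (\<Sum>i\<in>UNIV. \<xi> i * P i k)"
    by (simp add: dlt_sum)
  finally show ?thesis by (simp add: dlt_sum)
qed

lemma qf_delta: "qf P (dlt k) = P k k"
  using qf_expand[of P "\<lambda>_. 0" 1 k] by (simp add: qf_def)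

lemma lin_nonneg_zero:
  fixes A B :: real
  assumes "\<And>\<tau>. A + \<tau> * B \<ge> 0" shows "B = 0"
proof (rule ccontr)
  assume "B \<noteq> 0"
  have "A + (- (\<bar>A\<bar> + 1) / B) * B \<ge> 0" by (rule assms)
  moreover have "(- (\<bar>A\<bar> + 1) / B) * B = - (\<bar>A\<bar> + 1)" using \<open>B \<noteq> 0\<close> by simp
  ultimately have "A - (\<bar>A\<bar> + 1) \<ge> 0" by simp
  then show False by linarith
qed

lemma trace_core:
  fixes Q :: "'d::finite \<Rightarrow> 'd \<Rightarrow> real"
  assumes Qs: "\<And>i j. Q i j = Q j i" and Qp: "\<And>\<xi>. qf Q \<xi> \<ge> 0"
  assumes "finite S"
  shows "\<And>P. (\<forall>i j. P i j = P j i) \<Longrightarrow> (\<forall>\<xi>. qf P \<xi> \<ge> 0) \<Longrightarrow> (\<forall>i j. P i j \<noteq> 0 \<longrightarrow> i \<in> S) \<Longrightarrow>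
     (\<Sum>i\<in>UNIV. \<Sum>j\<in>UNIV. Q i j * P i j) \<ge> 0"
  using assms(3)
proof (induction S)
  case empty
  then have "\<And>i j. P i j = 0" by auto
  then show ?case by simp
next
  case (insert k S P)
  have Ps: "\<And>i j. P i j = P j i" and Pp: "\<And>\<xi>. qf P \<xi> \<ge> 0" using insert.prems by auto
  have a0: "P k k \<ge> 0" using Pp[of "dlt k"] by (simp add: qf_delta)
  show ?case
  proof (cases "P k k = 0")
    case True
    have row0: "P j k = 0" for j
    proof -
      have "qf P (\<lambda>i. dlt j i + \<tau> * dlt k i) \<ge> 0" for \<tau> by (rule Pp)
      then have "P j j + \<tau> * (2 * P j k) \<ge> 0" for \<tau>
        unfolding qf_expand qf_delta dlt_sum using True Ps[of k j]
        by (simp add: algebra_simps)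
      then show ?thesis using lin_nonneg_zero by fastforce
    qed
    have "\<forall>i j. P i j \<noteq> 0 \<longrightarrow> i \<in> S"
      using insert.prems(3) row0 Ps by (metis insert_iff)
    then show ?thesis using insert.IH Ps Pp by blast
  next
    case False
    with a0 have a: "P k k > 0" by simp
    define a where "a = P k k"
    define P' where "P' i j = P i j - P i k * P k j / a" for i j
    have P's: "\<forall>i j. P' i j = P' j i" unfolding P'_def using Ps by (auto simp: algebra_simps)
    have P'p: "\<forall>\<xi>. qf P' \<xi> \<ge> 0"
    proof
      fix \<xi>
      define s where "s = (\<Sum>i\<in>UNIV. \<xi> i * P i k)"
      have s2: "(\<Sum>j\<in>UNIV. \<xi> j * P k j) = s" unfolding s_def using Ps by (metis (no_types, lifting) sum.cong)
      have "qf P' \<xi> = qf P \<xi> - (\<Sum>i\<in>UNIV. \<Sum>j\<in>UNIV. (\<xi> i * P i k) * (\<xi> j * P k j)) / a"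
        unfolding qf_def P'_def by (simp add: algebra_simps sum_subtractf sum_divide_distrib)
      also have "(\<Sum>i\<in>UNIV. \<Sum>j\<in>UNIV. (\<xi> i * P i k) * (\<xi> j * P k j)) = s * s"
      proof -
        have "s * s = (\<Sum>i\<in>UNIV. \<xi> i * P i k) * (\<Sum>j\<in>UNIV. \<xi> j * P k j)" using s2 s_def by simp
        then show ?thesis by (simp add: sum_product)
      qed
      finally have e1: "qf P' \<xi> = qf P \<xi> - s * s / a" .
      have "qf P (\<lambda>i. \<xi> i + (- s / a) * dlt k i) \<ge> 0" by (rule Pp)
      then have "qf P \<xi> + (- s / a) * s + (- s / a) * s + (- s / a)\<^sup>2 * a \<ge> 0"
        unfolding qf_expand s2 s_def[symmetric] a_def .
      then have "qf P \<xi> - s * s / a \<ge> 0" using a unfolding a_def[symmetric]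
        by (simp add: field_simps power2_eq_square)
      then show "qf P' \<xi> \<ge> 0" using e1 by simp
    qed
    have P'sup: "\<forall>i j. P' i j \<noteq> 0 \<longrightarrow> i \<in> S"
    proof (intro allI impI)
      fix i j assume ne: "P' i j \<noteq> 0"
      show "i \<in> S"
      proof (rule ccontr)
        assume "i \<notin> S"
        show False
        proof (cases "i = k")
          case True then show False using ne a unfolding P'_def a_def by simp
        next
          case False
          with \<open>i \<notin> S\<close> have "P i j = 0" "P i k = 0" using insert.prems(3) by auto
          then show False using ne unfolding P'_def by simp
        qed
      qed
    qed
    have IH: "(\<Sum>i\<in>UNIV. \<Sum>j\<in>UNIV. Q i j * P' i j) \<ge> 0" using insert.IH P's P'p P'sup by blast
    have "(\<Sum>i\<in>UNIV. \<Sum>j\<in>UNIV. Q i j * P i j) =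
        (\<Sum>i\<in>UNIV. \<Sum>j\<in>UNIV. Q i j * P' i j) + qf Q (\<lambda>i. P i k) / a"
      unfolding P'_def qf_def using Ps
      by (simp add: algebra_simps sum.distrib sum_subtractf sum_divide_distrib)
    moreover have "qf Q (\<lambda>i. P i k) / a \<ge> 0" using Qp a unfolding a_def by simp
    ultimately show ?thesis using IH by linarith
  qed
qed

lemma trace_le:
  fixes Q H :: "'d::finite \<Rightarrow> 'd \<Rightarrow> real"
  assumes Qs: "\<And>i j. Q i j = Q j i" and Qp: "\<And>\<xi>. qf Q \<xi> \<ge> 0"
    and Hn: "\<And>\<xi>. qf H \<xi> \<le> 0"
  shows "(\<Sum>i\<in>UNIV. \<Sum>j\<in>UNIV. Q i j * H i j) \<le> 0"
proof -
  define P where "P i j = - (H i j + H j i) / 2" for i j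
  have Ps: "\<forall>i j. P i j = P j i" unfolding P_def by (auto simp: algebra_simps)
  have qfP: "qf P \<xi> = - qf H \<xi>" for \<xi>
  proof -
    define S1 where "S1 = (\<Sum>i\<in>UNIV. \<Sum>j\<in>UNIV. \<xi> i * \<xi> j * H i j)"
    define S2 where "S2 = (\<Sum>i\<in>UNIV. \<Sum>j\<in>UNIV. \<xi> i * \<xi> j * H j i)"
    have "qf P \<xi> = (\<Sum>i\<in>UNIV. \<Sum>j\<in>UNIV. (\<xi> i * \<xi> j * H i j) / 2 + (\<xi> i * \<xi> j * H j i) / 2) * (-1)"
      unfolding qf_def P_def sum_distrib_right by (intro sum.cong refl) (simp add: field_simps)
    also have "\<dots> = - (S1 / 2 + S2 / 2)"
      unfolding S1_def S2_def by (simp add: sum.distrib sum_divide_distrib)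
    also have "S2 = S1" unfolding S1_def S2_def
      by (subst sum.swap) (simp add: mult.commute)
    finally show ?thesis unfolding qf_def S1_def by simp
  qed
  have "(\<Sum>i\<in>UNIV. \<Sum>j\<in>UNIV. Q i j * P i j) \<ge> 0"
    using trace_core[OF Qs Qp, of UNIV P] Ps qfP Hn by auto
  moreover have "(\<Sum>i\<in>UNIV. \<Sum>j\<in>UNIV. Q i j * P i j) = - (\<Sum>i\<in>UNIV. \<Sum>j\<in>UNIV. Q i j * H i j)"
  proof -
    have "(\<Sum>i\<in>UNIV. \<Sum>j\<in>UNIV. Q i j * H j i) = (\<Sum>i\<in>UNIV. \<Sum>j\<in>UNIV. Q i j * H i j)"
      by (subst sum.swap) (simp add: Qs)
    moreover have "(\<Sum>i\<in>UNIV. \<Sum>j\<in>UNIV. Q i j * P i j) =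
       (\<Sum>i\<in>UNIV. \<Sum>j\<in>UNIV. (Q i j * H i j) / 2 + (Q i j * H j i) / 2) * (-1)"
      unfolding P_def sum_distrib_right by (intro sum.cong refl) (simp add: field_simps)
    ultimately show ?thesis by (simp add: sum.distrib sum_divide_distrib[symmetric])
  qed
  ultimately show ?thesis by simp
qed



lemma qf_inner: "v \<bullet> (M *v v) = qf (\<lambda>i j. M$i$j) (\<lambda>i. v$i)"
  unfolding qf_def inner_vec_def matrix_vector_mult_def
  by (simp add: sum_distrib_left algebra_simps)

lemma spatial_max:
  fixes f :: "real^'d::finite \<Rightarrow> real"
  assumes C: "C2 f" and mx: "\<And>y. f y \<le> f x0"
  shows "\<forall>i. pd i f x0 = 0" and "\<forall>\<xi>. qf (\<lambda>i j. pd i (pd j f) x0) \<xi> \<le> 0"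
proof -
  have hp: "\<And>i y. has_pd i f y" and cp: "\<And>i. continuous_on UNIV (pd i f)"
    and hp2: "\<And>i j y. has_pd i (pd j f) y" and cp2: "\<And>i j. continuous_on UNIV (pd i (pd j f))"
    using C unfolding C2_def by auto
  show P1: "\<forall>i. pd i f x0 = 0"
  proof
    fix i
    show "pd i f x0 = 0"
    proof (rule DERIV_local_max[OF pd_deriv0[OF hp] zero_less_one])
      show "\<forall>y. \<bar>0 - y\<bar> < 1 \<longrightarrow> f (x0 + y *\<^sub>R axis i 1) \<le> f (x0 + 0 *\<^sub>R axis i 1)"
        using mx by simp
    qed
  qed
  show "\<forall>\<xi>. qf (\<lambda>i j. pd i (pd j f) x0) \<xi> \<le> 0"
  proof
    fix \<xi>0 :: "'d \<Rightarrow> real"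
    define \<xi> where "\<xi> = (\<chi> i. \<xi>0 i)"
    define g where "g h = f (x0 + h *\<^sub>R \<xi>)" for h
    define G where "G h = (\<Sum>j\<in>UNIV. \<xi>$j * pd j f (x0 + h *\<^sub>R \<xi>))" for h
    define D2 where "D2 = (\<Sum>j\<in>UNIV. \<xi>$j * (\<Sum>i\<in>UNIV. \<xi>$i * pd i (pd j f) (x0 + 0 *\<^sub>R \<xi>)))"
    have dg: "(g has_real_derivative G h) (at h)" for h
      unfolding g_def G_def by (rule dir_deriv[OF hp cp])
    have dG: "(G has_real_derivative D2) (at 0)"
      unfolding G_def D2_def
      by (intro DERIV_sum DERIV_cmult dir_deriv[OF hp2 cp2])
    have G0: "G 0 = 0" unfolding G_def using P1 by simp
    have "D2 \<le> 0"
    proof (rule ccontr)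
      assume "\<not> D2 \<le> 0"
      then have "D2 > 0" by simp
      from DERIV_pos_inc_right[OF dG this] obtain d where d: "d > 0" "\<And>h. h > 0 \<Longrightarrow> h < d \<Longrightarrow> G 0 < G (0 + h)"
        by blast
      define h where "h = d / 2"
      have h: "0 < h" "h < d" using d by (auto simp: h_def)
      from MVT2[of 0 h g G] h dg obtain z where z: "0 < z" "z < h" "g h - g 0 = (h - 0) * G z" by blast
      have "G z > 0" using d(2)[of z] z h G0 by simp
      then have "g h - g 0 > 0" using z h by simp
      moreover have "g h \<le> g 0" unfolding g_def using mx by simp
      ultimately show False by simp
    qed
    moreover have "D2 = qf (\<lambda>i j. pd i (pd j f) x0) \<xi>0"
    proof -
      have "D2 = (\<Sum>j\<in>UNIV. \<Sum>i\<in>UNIV. \<xi>0 i * \<xi>0 j * pd i (pd j f) x0)"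
        unfolding D2_def \<xi>_def by (simp add: sum_distrib_left algebra_simps)
      also have "\<dots> = qf (\<lambda>i j. pd i (pd j f) x0) \<xi>0"
        unfolding qf_def by (rule sum.swap)
      finally show ?thesis .
    qed
    ultimately show "qf (\<lambda>i j. pd i (pd j f) x0) \<xi>0 \<le> 0" by simp
  qed
qed

lemma Aop_at_max:
  fixes w :: "real^'d::finite \<Rightarrow> real"
  assumes C: "C2 w" and mx: "\<And>y. w y \<le> w x0"
    and Qs: "\<And>i j. Q t x0 $ i $ j = Q t x0 $ j $ i"
    and Qp: "\<And>v. v \<bullet> (Q t x0 *v v) \<ge> 0"
  shows "Aop Q b c t w x0 \<le> - c t x0 * w x0"
proof -
  note sm = spatial_max[OF C mx]
  have t1: "(\<Sum>i\<in>UNIV. \<Sum>j\<in>UNIV. Q t x0 $ i $ j * pd i (pd j w) x0) \<le> 0"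
  proof (rule trace_le[where Q = "\<lambda>i j. Q t x0 $ i $ j" and H = "\<lambda>i j. pd i (pd j w) x0"])
    show "\<And>i j. Q t x0 $ i $ j = Q t x0 $ j $ i" by (rule Qs)
    show "0 \<le> qf (\<lambda>i j. Q t x0 $ i $ j) \<xi>" for \<xi>
    proof -
      have e: "(\<lambda>i. (\<chi> i. \<xi> i) $ i) = \<xi>" by (rule ext) simp
      show ?thesis using Qp[of "\<chi> i. \<xi> i"] unfolding qf_inner e .
    qed
    show "qf (\<lambda>i j. pd i (pd j w) x0) \<xi> \<le> 0" for \<xi> using sm(2) by blast
  qed
  have t2: "(\<Sum>i\<in>UNIV. b t x0 $ i * pd i w x0) = 0" using sm(1) by simp
  show ?thesis unfolding Aop_def using t1 t2 by simp
qed



lemma max_principle: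
  fixes w :: "real \<Rightarrow> real^'d::finite \<Rightarrow> real"
  assumes cont: "continuous_on ({s..T} \<times> UNIV) (\<lambda>(t,x). w t x)"
    and init: "\<And>x. w s x \<le> 0"
    and decay: "\<And>t x. t \<in> {s..T} \<Longrightarrow> norm x \<ge> r \<Longrightarrow> w t x \<le> 0"
    and reg: "\<And>t. t \<in> {s<..T} \<Longrightarrow> C2 (w t)"
    and tdiff: "\<And>t x. t \<in> {s<..T} \<Longrightarrow> (\<lambda>\<tau>. w \<tau> x) differentiable (at t)"
    and ineq: "\<And>t x. t \<in> {s<..T} \<Longrightarrow> dt w t x \<le> Aop Q b c t (w t) x"
    and Qs: "\<And>t x i j. t \<in> {s<..T} \<Longrightarrow> Q t x $ i $ j = Q t x $ j $ i"
    and Qp: "\<And>t x v. t \<in> {s<..T} \<Longrightarrow> v \<bullet> (Q t x *v v) \<ge> 0"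
    and cb: "\<And>t x. t \<in> {s<..T} \<Longrightarrow> c t x \<ge> cmn"
    and t1: "t1 \<in> {s..T}"
  shows "w t1 x1 \<le> 0"
proof (rule ccontr)
  assume "\<not> w t1 x1 \<le> 0"
  then have pos1: "w t1 x1 > 0" by simp
  have nx1: "norm x1 < r" using decay[OF t1, of x1] pos1 by force
  define \<beta> where "\<beta> = \<bar>cmn\<bar> + 1"
  define Zp where "Zp p = exp (- \<beta> * (fst p - s)) * w (fst p) (snd p)" for p :: "real \<times> (real^'d)"
  define K where "K = {s..T} \<times> cball (0::real^'d) r"
  have cK: "compact K" unfolding K_def by (intro compact_Times compact_Icc compact_cball)
  have neK: "(t1, x1) \<in> K" using t1 nx1 unfolding K_def by auto
  have contK: "continuous_on K Zp"
  proof -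
    have "continuous_on K (\<lambda>(t,x). w t x)"
      by (rule continuous_on_subset[OF cont]) (auto simp: K_def)
    then have "continuous_on K (\<lambda>p. w (fst p) (snd p))" by (simp add: case_prod_beta')
    then show ?thesis unfolding Zp_def
      by (intro continuous_intros) auto
  qed
  from continuous_attains_sup[OF cK _ contK] neK obtain p0 where p0: "p0 \<in> K" "\<And>q. q \<in> K \<Longrightarrow> Zp q \<le> Zp p0"
    by blast
  obtain t0 x0 where p0e: "p0 = (t0, x0)" by (cases p0)
  have t0K: "t0 \<in> {s..T}" and x0K: "norm x0 \<le> r" using p0(1) p0e by (auto simp: K_def)
  have "Zp (t1, x1) > 0" unfolding Zp_def using pos1 by simp
  then have "Zp p0 > 0" using p0(2)[OF neK] by simp
  then have pos0: "w t0 x0 > 0" unfolding Zp_def p0e by (simp add: zero_less_mult_iff)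
  have "t0 \<noteq> s" using init[of x0] pos0 by auto
  with t0K have t0I: "t0 \<in> {s<..T}" by auto
  define E where "E = exp (- \<beta> * (t0 - s))"
  have Epos: "E > 0" unfolding E_def by simp
  have smax: "w t0 y \<le> w t0 x0" for y
  proof (cases "norm y \<le> r")
    case True
    then have "(t0, y) \<in> K" using t0K by (auto simp: K_def)
    from p0(2)[OF this] have "E * w t0 y \<le> E * w t0 x0" unfolding Zp_def p0e E_def by simp
    with Epos show ?thesis by simp
  next
    case False
    then show ?thesis using decay[OF t0K, of y] pos0 by simp
  qed
  have A1: "Aop Q b c t0 (w t0) x0 \<le> - c t0 x0 * w t0 x0"
    by (rule Aop_at_max[where Q=Q and t=t0, OF reg[OF t0I] smax Qs[OF t0I] Qp[OF t0I]])
  have "- c t0 x0 * w t0 x0 \<le> - cmn * w t0 x0" using cb[OF t0I, of x0] pos0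
    by (simp add: mult_right_mono)
  with A1 ineq[OF t0I, of x0] have Dle: "dt w t0 x0 \<le> - cmn * w t0 x0" by simp
  have dw: "((\<lambda>\<tau>. w \<tau> x0) has_real_derivative dt w t0 x0) (at t0)"
    unfolding dt_def using tdiff[OF t0I] DERIV_deriv_iff_real_differentiable by blast
  define Zt where "Zt \<tau> = exp (- \<beta> * (\<tau> - s)) * w \<tau> x0" for \<tau>
  have dZ: "(Zt has_real_derivative (E * (- \<beta>)) * w t0 x0 + E * dt w t0 x0) (at t0)"
  proof -
    have de: "((\<lambda>\<tau>. exp (- \<beta> * (\<tau> - s))) has_real_derivative E * (- \<beta>)) (at t0)"
      unfolding E_def by (auto intro!: derivative_eq_intros)
    show ?thesis using DERIV_mult[OF de dw] unfolding Zt_def E_def by (simp add: algebra_simps)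
  qed
  have "E * (- \<beta>) * w t0 x0 + E * dt w t0 x0 \<le> E * (- \<beta> * w t0 x0 - cmn * w t0 x0)"
    using mult_left_mono[OF Dle, of E] Epos by (simp add: algebra_simps)
  also have "\<dots> < 0"
  proof -
    have "\<beta> + cmn \<ge> 1" unfolding \<beta>_def by linarith
    then have "(\<beta> + cmn) * w t0 x0 > 0" using pos0 by simp
    then have "E * ((\<beta> + cmn) * w t0 x0) > 0" using Epos by simp
    then show ?thesis by (simp add: algebra_simps)
  qed
  finally have neg: "E * (- \<beta>) * w t0 x0 + E * dt w t0 x0 < 0" .
  from DERIV_neg_dec_left[OF dZ neg] obtain d where d: "d > 0" "\<And>h. h > 0 \<Longrightarrow> h < d \<Longrightarrow> Zt t0 < Zt (t0 - h)"
    by blast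
  define h where "h = min (d / 2) (t0 - s)"
  have h: "h > 0" "h < d" using d t0I by (auto simp: h_def)
  have "(t0 - h, x0) \<in> K" using t0K x0K h unfolding K_def h_def by auto
  from p0(2)[OF this] have "Zt (t0 - h) \<le> Zt t0" unfolding Zp_def p0e Zt_def by simp
  with d(2)[OF h] show False by simp
qed



lemma pd_lin:
  assumes "has_pd i F x" "has_pd i G x"
  shows "pd i (\<lambda>y. F y - (A * G y + B)) x = pd i F x - A * pd i G x"
    and "has_pd i (\<lambda>y. F y - (A * G y + B)) x"
proof -
  have d: "((\<lambda>h. F (x + h *\<^sub>R axis i 1) - (A * G (x + h *\<^sub>R axis i 1) + B)) has_real_derivative
      pd i F x - (A * pd i G x + 0)) (at 0)"
    by (rule DERIV_diff[OF pd_deriv0[OF assms(1)] DERIV_add[OF DERIV_cmult[OF pd_deriv0[OF assms(2)]] DERIV_const]])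
  have "pd i (\<lambda>y. F y - (A * G y + B)) x = pd i F x - (A * pd i G x + 0)"
    unfolding pd_def by (rule DERIV_imp_deriv[OF d[unfolded pd_def]])
  then show "pd i (\<lambda>y. F y - (A * G y + B)) x = pd i F x - A * pd i G x" by simp
  show "has_pd i (\<lambda>y. F y - (A * G y + B)) x"
    unfolding has_pd_def real_differentiable_def using d by blast
qed

lemma C2_lin:
  fixes F G :: "real^'d::finite \<Rightarrow> real"
  assumes F: "C2 F" and G: "C2 G"
  shows "C2 (\<lambda>y. F y - (A * G y + B))"
    and "pd j (\<lambda>y. F y - (A * G y + B)) = (\<lambda>y. pd j F y - (A * pd j G y + 0))"
    and "Aop Q b c t (\<lambda>y. F y - (A * G y + B)) x = Aop Q b c t F x - A * Aop Q b c t G x + c t x * B"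
proof -
  have hF: "\<And>i y. has_pd i F y" and cF: "\<And>i. continuous_on UNIV (pd i F)"
    and hF2: "\<And>i j y. has_pd i (pd j F) y" and cF2: "\<And>i j. continuous_on UNIV (pd i (pd j F))"
    and cF0: "continuous_on UNIV F"
    using F unfolding C2_def by auto
  have hG: "\<And>i y. has_pd i G y" and cG: "\<And>i. continuous_on UNIV (pd i G)"
    and hG2: "\<And>i j y. has_pd i (pd j G) y" and cG2: "\<And>i j. continuous_on UNIV (pd i (pd j G))"
    and cG0: "continuous_on UNIV G"
    using G unfolding C2_def by auto
  have e1: "pd j (\<lambda>y. F y - (A * G y + B)) = (\<lambda>y. pd j F y - (A * pd j G y + 0))" for j
    by (rule ext) (simp add: pd_lin hF hG)
  then show "pd j (\<lambda>y. F y - (A * G y + B)) = (\<lambda>y. pd j F y - (A * pd j G y + 0))" .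
  have e2: "pd i (pd j (\<lambda>y. F y - (A * G y + B))) y = pd i (pd j F) y - A * pd i (pd j G) y" for i j y
    unfolding e1 by (rule pd_lin(1)[OF hF2 hG2])
  have e1': "pd j (\<lambda>y. F y - (A * G y + B)) y = pd j F y - A * pd j G y" for j y
    by (simp add: e1)
  show "C2 (\<lambda>y. F y - (A * G y + B))"
    unfolding C2_def
  proof (intro conjI allI)
    show "continuous_on UNIV (\<lambda>y. F y - (A * G y + B))"
      by (intro continuous_intros cF0 cG0)
    show "has_pd i (\<lambda>y. F y - (A * G y + B)) x" for i x by (rule pd_lin(2)[OF hF hG])
    show "continuous_on UNIV (pd i (\<lambda>y. F y - (A * G y + B)))" for i
      unfolding e1 by (intro continuous_intros cF cG)
    show "has_pd i (pd j (\<lambda>y. F y - (A * G y + B))) x" for i j x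
      unfolding e1 by (rule pd_lin(2)[OF hF2 hG2])
    show "continuous_on UNIV (pd i (pd j (\<lambda>y. F y - (A * G y + B))))" for i j
    proof -
      have "pd i (pd j (\<lambda>y. F y - (A * G y + B))) = (\<lambda>y. pd i (pd j F) y - A * pd i (pd j G) y)"
        by (rule ext) (rule e2)
      then show ?thesis by (simp add: continuous_intros cF2 cG2)
    qed
  qed
  show "Aop Q b c t (\<lambda>y. F y - (A * G y + B)) x = Aop Q b c t F x - A * Aop Q b c t G x + c t x * B"
  proof -
    have s1: "(\<Sum>i\<in>UNIV. \<Sum>j\<in>UNIV. Q t x $ i $ j * (pd i (pd j F) x - A * pd i (pd j G) x)) =
      (\<Sum>i\<in>UNIV. \<Sum>j\<in>UNIV. Q t x $ i $ j * pd i (pd j F) x) - A * (\<Sum>i\<in>UNIV. \<Sum>j\<in>UNIV. Q t x $ i $ j * pd i (pd j G) x)"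
      by (simp add: right_diff_distrib sum_subtractf sum_distrib_left mult.left_commute)
    have s2: "(\<Sum>i\<in>UNIV. b t x $ i * (pd i F x - A * pd i G x)) =
      (\<Sum>i\<in>UNIV. b t x $ i * pd i F x) - A * (\<Sum>i\<in>UNIV. b t x $ i * pd i G x)"
      by (simp add: right_diff_distrib sum_subtractf sum_distrib_left mult.left_commute)
    show ?thesis unfolding Aop_def e2 e1' s1 s2 by (simp add: algebra_simps)
  qed
qed



theorem proposition4p9:
  fixes \<alpha> :: real
    and I :: "real set"
    and Q :: "real \<Rightarrow> real^'d::finite \<Rightarrow> real^'d^'d"
    and b :: "real \<Rightarrow> real^'d \<Rightarrow> real^'d"
    and c :: "real \<Rightarrow> real^'d \<Rightarrow> real"
    and \<eta> :: "real \<Rightarrow> real^'d \<Rightarrow> real"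
    and g :: "real \<Rightarrow> real \<Rightarrow> real^'d \<Rightarrow> real^'d \<Rightarrow> real"
  assumes alpha: "0 < \<alpha>" "\<alpha> < 1"
    and I_shape: "I = UNIV \<or> (\<exists>a. I = {a..} \<or> I = {a<..})"
    and Q_hoelder: "\<And>i j. hoelder_loc \<alpha> (I \<times> UNIV) (\<lambda>t x. Q t x $ i $ j)"
    and b_hoelder: "\<And>i. hoelder_loc \<alpha> (I \<times> UNIV) (\<lambda>t x. b t x $ i)"
    and c_hoelder: "hoelder_loc \<alpha> (I \<times> UNIV) c"
    and c_below: "\<exists>c0. \<forall>t\<in>I. \<forall>x. c t x \<ge> c0"
    and Q_sym: "\<And>t x i j. t \<in> I \<Longrightarrow> Q t x $ i $ j = Q t x $ j $ i"
    and Q_ell: "\<And>t x \<xi>. t \<in> I \<Longrightarrow> \<xi> \<bullet> (Q t x *v \<xi>) \<ge> \<eta> t x * (norm \<xi>)\<^sup>2"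
    and eta_pos: "\<exists>\<eta>0>0. \<forall>t\<in>I. \<forall>x. \<eta> t x \<ge> \<eta>0"
    and Lyap: "\<And>J. J \<subseteq> I \<Longrightarrow> bounded_interval J \<Longrightarrow>
        \<exists>\<phi> lam. C2 \<phi> \<and> (\<forall>x. \<phi> x > 0) \<and> filterlim \<phi> at_top at_infinity
          \<and> (\<forall>t\<in>J. \<forall>x. Aop Q b c t \<phi> x \<le> lam * \<phi> x)"
    and g_pos: "\<And>t s x y. s \<in> I \<Longrightarrow> t > s \<Longrightarrow> g t s x y > 0"
    and g_meas: "\<And>t s x. s \<in> I \<Longrightarrow> t > s \<Longrightarrow> g t s x \<in> borel_measurable lborel"
    and g_green: "\<And>s f. s \<in> I \<Longrightarrow> Cb f \<Longrightarrow>
        (\<forall>t x. t > s \<longrightarrow> integrable lborel (\<lambda>y. g t s x y * f y))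
        \<and> is_cauchy_solution \<alpha> Q b c s f
            (\<lambda>t x. if t = s then f x else (\<integral>y. g t s x y * f y \<partial>lborel))"
    and H1: "\<And>J. J \<subseteq> I \<Longrightarrow> bounded_interval J \<Longrightarrow>
        \<exists>\<psi> lam. C2 \<psi> \<and> (\<forall>x. \<psi> x > 0) \<and> filterlim \<psi> at_top at_infinity
          \<and> (\<forall>t\<in>J. \<forall>x. Aop_mc Q b c t \<psi> x - lam * \<psi> x \<le> 0)"
    and H2: "\<And>J. J \<subseteq> I \<Longrightarrow> bounded_interval J \<Longrightarrow>
        \<exists>\<phi> M. C2 \<phi> \<and> (\<forall>x. \<phi> x > 0) \<and> filterlim \<phi> at_top at_infinity \<and> M > 0
          \<and> (\<forall>t\<in>J. \<forall>x. Aop Q b c t \<phi> x \<le> M)"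
  shows "\<forall>J. J \<subseteq> I \<and> bounded_interval J \<longrightarrow>
           (\<forall>R>0. \<forall>\<epsilon>>0. \<exists>M>0. \<forall>t s x. s \<in> J \<and> t \<in> J \<and> t \<ge> s \<and> norm x \<le> R \<longrightarrow>
              emeasure (gmeas g t s x) (UNIV - ball 0 M) \<le> ennreal \<epsilon>)"
proof (intro allI impI)
  fix J :: "real set" and R \<epsilon> :: real
  assume JJ: "J \<subseteq> I \<and> bounded_interval J" and R: "R > 0" and eps: "\<epsilon> > 0"
  have JI: "J \<subseteq> I" and bJ: "bounded_interval J" using JJ by auto
  obtain \<phi> M2 where phiC2: "C2 \<phi>" and phipos: "\<And>x. \<phi> x > 0" and philim: "filterlim \<phi> at_top at_infinity"
    and M2pos: "M2 > 0" and phiA: "\<And>t x. t \<in> J \<Longrightarrow> Aop Q b c t \<phi> x \<le> M2"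
    using H2[OF JI bJ] by blast
  obtain c0 where c0: "\<And>t x. t \<in> I \<Longrightarrow> c t x \<ge> c0" using c_below by blast
  obtain \<eta>0 where eta0: "\<eta>0 > 0" "\<And>t x. t \<in> I \<Longrightarrow> \<eta> t x \<ge> \<eta>0" using eta_pos by blast
  have bJ': "bounded J" and iJ: "is_interval J" using bJ unfolding bounded_interval_def by auto
  obtain B where B: "\<And>t. t \<in> J \<Longrightarrow> \<bar>t\<bar> \<le> B" using bJ' unfolding bounded_real by blast
  have phic: "continuous_on UNIV \<phi>" using phiC2 unfolding C2_def by blast
  obtain \<Phi> where Phi: "\<And>x. norm x \<le> R \<Longrightarrow> \<phi> x \<le> \<Phi>"
  proof -
    have "compact (\<phi> ` cball 0 R)"
      by (rule compact_continuous_image[OF continuous_on_subset[OF phic] compact_cball]) auto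
    then have "bounded (\<phi> ` cball 0 R)" by (rule compact_imp_bounded)
    then obtain P where "\<forall>y\<in>\<phi> ` cball 0 R. \<bar>y\<bar> \<le> P" unfolding bounded_real by blast
    then have "\<And>x. norm x \<le> R \<Longrightarrow> \<phi> x \<le> P" by force
    then show ?thesis using that by blast
  qed
  have large: "\<exists>r. \<forall>y. norm y \<ge> r \<longrightarrow> \<phi> y \<ge> Z" for Z
  proof -
    have "eventually (\<lambda>y. Z \<le> \<phi> y) at_infinity" using philim unfolding filterlim_at_top by blast
    then show ?thesis unfolding eventually_at_infinity by blast
  qed
  define \<gamma> where "\<gamma> = max 0 (- c0)"
  have gam: "\<gamma> \<ge> 0" "\<gamma> + c0 \<ge> 0" unfolding \<gamma>_def by auto
  define C where "C = exp (\<gamma> * (2 * B)) * (\<Phi> + M2 * (2 * B))"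
  define L where "L = max 1 (C / \<epsilon>)"
  define a where "a = 1 / L"
  have Lpos: "L > 0" unfolding L_def by simp
  have apos: "a > 0" unfolding a_def using Lpos by simp
  have aC: "a * C \<le> \<epsilon>"
  proof -
    have "C / \<epsilon> \<le> L" unfolding L_def by simp
    then have "C \<le> L * \<epsilon>" using eps by (simp add: field_simps)
    then show ?thesis unfolding a_def using Lpos by (simp add: field_simps)
  qed
  obtain M0 where M0: "\<And>y. norm y \<ge> M0 \<Longrightarrow> \<phi> y \<ge> L" using large[of L] by blast
  define M where "M = max (R + 1) M0"
  define f where "f y = min 1 (a * \<phi> y)" for y
  have f0: "f y \<ge> 0" for y unfolding f_def using apos phipos[of y] by simp
  have f1: "f y = 1" if "norm y \<ge> M" for y
  proof -
    have "\<phi> y \<ge> L" using M0 that unfolding M_def by simp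
    then have "a * \<phi> y \<ge> 1" unfolding a_def using Lpos by (simp add: field_simps)
    then show ?thesis unfolding f_def by simp
  qed
  have Cbf: "Cb f"
    unfolding Cb_def
  proof
    show "continuous_on UNIV f" unfolding f_def by (intro continuous_intros phic)
    have "\<forall>y\<in>range f. \<bar>y\<bar> \<le> 1" using f0 unfolding f_def by auto
    then show "bounded (range f)" unfolding bounded_real by blast
  qed
  show "\<exists>M>0. \<forall>t s x. s \<in> J \<and> t \<in> J \<and> t \<ge> s \<and> norm x \<le> R \<longrightarrow>
              emeasure (gmeas g t s x) (UNIV - ball 0 M) \<le> ennreal \<epsilon>"
  proof (intro exI[of _ M] conjI allI impI)
    show "M > 0" unfolding M_def using R by simp
    fix t s :: real and x :: "real^'d"
    assume H: "s \<in> J \<and> t \<in> J \<and> t \<ge> s \<and> norm x \<le> R"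
    then have sJ: "s \<in> J" and tJ: "t \<in> J" and st: "s \<le> t" and xR: "norm x \<le> R" by auto
    have sI: "s \<in> I" using sJ JI by auto
    have Aset: "UNIV - ball (0::real^'d) M \<in> sets lborel" by simp
    show "emeasure (gmeas g t s x) (UNIV - ball 0 M) \<le> ennreal \<epsilon>"
    proof (cases "t = s")
      case True
      have "x \<notin> UNIV - ball 0 M" using xR unfolding M_def by auto
      then show ?thesis using True Aset by (simp add: gmeas_def)
    next
      case False
      with st have ts: "s < t" by simp
      define U where "U = (\<lambda>\<tau> y. if \<tau> = s then f y else (\<integral>z. g \<tau> s y z * f z \<partial>lborel))"
      have gg: "(\<forall>\<tau> y. \<tau> > s \<longrightarrow> integrable lborel (\<lambda>z. g \<tau> s y z * f z))"
        and cs: "is_cauchy_solution \<alpha> Q b c s f U"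
        using g_green[OF sI Cbf] unfolding U_def by auto
      have Ucont: "continuous_on ({s..} \<times> UNIV) (\<lambda>(t, x). U t x)"
        and Ubd: "bounded ((\<lambda>(t, x). U t x) ` ({s..t} \<times> UNIV))"
        and C12: "C12_hoelder_loc \<alpha> ({s<..} \<times> UNIV) U"
        and Ueq: "\<And>\<tau> y. \<tau> > s \<Longrightarrow> dt U \<tau> y = Aop Q b c \<tau> (U \<tau>) y"
        and Us: "U s = f"
        using cs unfolding is_cauchy_solution_def by auto
      have C12a: "\<forall>(t, x) \<in> {s<..} \<times> UNIV. (\<lambda>\<tau>. U \<tau> x) differentiable (at t)
          \<and> (\<forall>i. has_pd i (U t) x) \<and> (\<forall>i j. has_pd i (pd j (U t)) x)"
        and C12b: "continuous_on ({s<..} \<times> UNIV) (\<lambda>(t, x). U t x)"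
        and C12c: "\<And>i. continuous_on ({s<..} \<times> UNIV) (\<lambda>(t, x). pd i (U t) x)"
        and C12d: "\<And>i j. continuous_on ({s<..} \<times> UNIV) (\<lambda>(t, x). pd i (pd j (U t)) x)"
        using C12 unfolding C12_hoelder_loc_def by auto
      have slice: "continuous_on UNIV (h \<tau>)"
        if "continuous_on ({s<..} \<times> UNIV) (\<lambda>(t, x). h t x)" "\<tau> > s" for h :: "real \<Rightarrow> real^'d \<Rightarrow> real" and \<tau>
      proof -
        have "continuous_on UNIV (\<lambda>y. (\<lambda>(t, x). h t x) (\<tau>, y))"
          by (rule continuous_on_compose2[OF that(1)]) (use that(2) in \<open>auto intro!: continuous_intros\<close>)
        then show ?thesis by simp
      qed
      have Ud: "\<And>\<tau> y. \<tau> > s \<Longrightarrow> (\<lambda>\<sigma>. U \<sigma> y) differentiable (at \<tau>)" using C12a by auto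
      have UC2: "C2 (U \<tau>)" if "\<tau> > s" for \<tau>
        unfolding C2_def using that C12a slice[OF C12b that] slice[OF C12c that] slice[OF C12d that] by auto
      define Ea where "Ea \<tau> = a * exp (\<gamma> * (\<tau> - s))" for \<tau>
      have Ea_ge: "Ea \<tau> \<ge> a" if "\<tau> \<ge> s" for \<tau>
        unfolding Ea_def using apos gam that by simp
      define w where "w = (\<lambda>\<tau> y. U \<tau> y - (Ea \<tau> * \<phi> y + Ea \<tau> * M2 * (\<tau> - s)))"
      obtain Bu where Bu: "\<And>\<tau> y. \<tau> \<in> {s..t} \<Longrightarrow> \<bar>U \<tau> y\<bar> \<le> Bu"
        using Ubd unfolding bounded_real by force
      obtain r where r: "\<And>y. norm y \<ge> r \<Longrightarrow> \<phi> y \<ge> Bu * L" using large[of "Bu * L"] by blast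
      have subJ: "\<tau> \<in> J" if "s \<le> \<tau>" "\<tau> \<le> t" for \<tau>
        using iJ sJ tJ that unfolding is_interval_1 by blast
      define dV where "dV \<tau> y = Ea \<tau> * \<gamma> * \<phi> y + (Ea \<tau> * \<gamma> * M2 * (\<tau> - s) + Ea \<tau> * M2)" for \<tau> y
      have dVd: "((\<lambda>\<sigma>. Ea \<sigma> * \<phi> y + Ea \<sigma> * M2 * (\<sigma> - s)) has_real_derivative dV \<tau> y) (at \<tau>)" for \<tau> y
        unfolding Ea_def dV_def by (auto intro!: derivative_eq_intros simp: algebra_simps)
      have dw: "((\<lambda>\<sigma>. w \<sigma> y) has_real_derivative dt U \<tau> y - dV \<tau> y) (at \<tau>)" if "\<tau> > s" for \<tau> y
      proof -
        have "((\<lambda>\<sigma>. U \<sigma> y) has_real_derivative dt U \<tau> y) (at \<tau>)"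
          unfolding dt_def using Ud[OF that] DERIV_deriv_iff_real_differentiable by blast
        from DERIV_diff[OF this dVd] show ?thesis unfolding w_def by simp
      qed
      have "w t x \<le> 0"
      proof (rule max_principle[where w = w and s = s and T = t and r = r and Q = Q and b = b and c = c and cmn = c0])
        show "continuous_on ({s..t} \<times> UNIV) (\<lambda>(t, x). w t x)"
        proof -
          have c1: "continuous_on ({s..t} \<times> UNIV) (\<lambda>(t, x). U t x)"
            by (rule continuous_on_subset[OF Ucont]) auto
          have c2: "continuous_on ({s..t} \<times> (UNIV :: (real^'d) set)) (\<lambda>p. \<phi> (snd p))"
            by (rule continuous_on_compose2[OF phic continuous_on_snd]) auto
          have "continuous_on ({s..t} \<times> UNIV) (\<lambda>p. (\<lambda>(t, x). U t x) p - (Ea (fst p) * \<phi> (snd p) + Ea (fst p) * M2 * (fst p - s)))"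
            unfolding Ea_def by (intro continuous_intros c1 c2)
          then show ?thesis unfolding w_def by (simp add: case_prod_beta')
        qed
        show "w s y \<le> 0" for y
          unfolding w_def Us Ea_def f_def by simp
        show "w \<tau> y \<le> 0" if "\<tau> \<in> {s..t}" "norm y \<ge> r" for \<tau> y
        proof -
          have "U \<tau> y \<le> Bu" using Bu[OF that(1), of y] by simp
          also have "Bu = a * (Bu * L)" unfolding a_def using Lpos by simp
          also have "a * (Bu * L) \<le> a * \<phi> y" using r[OF that(2)] apos by simp
          also have "\<dots> \<le> Ea \<tau> * \<phi> y" using Ea_ge[of \<tau>] that(1) phipos[of y] by (simp add: mult_right_mono)
          also have "\<dots> \<le> Ea \<tau> * \<phi> y + Ea \<tau> * M2 * (\<tau> - s)"
            using Ea_ge[of \<tau>] that(1) apos M2pos by simp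
          finally show ?thesis unfolding w_def by simp
        qed
        show "C2 (w \<tau>)" if "\<tau> \<in> {s<..t}" for \<tau>
          unfolding w_def using C2_lin(1)[OF UC2 phiC2] that by simp
        show "(\<lambda>\<sigma>. w \<sigma> y) differentiable (at \<tau>)" if "\<tau> \<in> {s<..t}" for \<tau> y
          unfolding real_differentiable_def using dw that by auto
        show "dt w \<tau> y \<le> Aop Q b c \<tau> (w \<tau>) y" if "\<tau> \<in> {s<..t}" for \<tau> y
        proof -
          have \<tau>s: "\<tau> > s" and \<tau>J: "\<tau> \<in> J" using that subJ by auto
          have \<tau>I: "\<tau> \<in> I" using \<tau>J JI by auto
          have e1: "dt w \<tau> y = dt U \<tau> y - dV \<tau> y"
            using DERIV_imp_deriv[OF dw[OF \<tau>s, of y]] unfolding dt_def by simp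
          have e2: "Aop Q b c \<tau> (w \<tau>) y = Aop Q b c \<tau> (U \<tau>) y - Ea \<tau> * Aop Q b c \<tau> \<phi> y + c \<tau> y * (Ea \<tau> * M2 * (\<tau> - s))"
            unfolding w_def using C2_lin(3)[OF UC2[OF \<tau>s] phiC2] by simp
          have key: "Aop Q b c \<tau> \<phi> y - c \<tau> y * (M2 * (\<tau> - s)) \<le> \<gamma> * \<phi> y + \<gamma> * M2 * (\<tau> - s) + M2"
          proof -
            have "Aop Q b c \<tau> \<phi> y \<le> M2" by (rule phiA[OF \<tau>J])
            moreover have "\<gamma> * \<phi> y \<ge> 0" using gam phipos[of y] by simp
            moreover have "(\<gamma> + c \<tau> y) * (M2 * (\<tau> - s)) \<ge> 0"
              using gam c0[OF \<tau>I, of y] M2pos \<tau>s by (intro mult_nonneg_nonneg) auto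
            ultimately show ?thesis by (simp add: algebra_simps)
          qed
          have Epos: "Ea \<tau> > 0" unfolding Ea_def using apos by simp
          have "Ea \<tau> * (Aop Q b c \<tau> \<phi> y - c \<tau> y * (M2 * (\<tau> - s))) \<le> Ea \<tau> * (\<gamma> * \<phi> y + \<gamma> * M2 * (\<tau> - s) + M2)"
            using mult_left_mono[OF key, of "Ea \<tau>"] Epos by simp
          then have "Ea \<tau> * Aop Q b c \<tau> \<phi> y - c \<tau> y * (Ea \<tau> * M2 * (\<tau> - s)) \<le> dV \<tau> y"
            unfolding dV_def by (simp add: algebra_simps)
          then show ?thesis unfolding e1 e2 Ueq[OF \<tau>s] by simp
        qed
        show "Q \<tau> y $ i $ j = Q \<tau> y $ j $ i" if "\<tau> \<in> {s<..t}" for \<tau> y i j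
        proof - have "\<tau> \<in> I" using that subJ JI by auto then show ?thesis by (rule Q_sym) qed
        show "v \<bullet> (Q \<tau> y *v v) \<ge> 0" if "\<tau> \<in> {s<..t}" for \<tau> y v
        proof -
          have \<tau>I: "\<tau> \<in> I" using that subJ JI by auto
          have "\<eta> \<tau> y * (norm v)\<^sup>2 \<ge> 0" using eta0(1) eta0(2)[OF \<tau>I, of y] by simp
          then show ?thesis using Q_ell[OF \<tau>I, of y v] by linarith
        qed
        show "c \<tau> y \<ge> c0" if "\<tau> \<in> {s<..t}" for \<tau> y
          proof - have "\<tau> \<in> I" using that subJ JI by auto then show ?thesis by (rule c0) qed
        show "t \<in> {s..t}" using st by simp
      qed
      then have Ule: "U t x \<le> Ea t * (\<phi> x + M2 * (t - s))" unfolding w_def by (simp add: algebra_simps)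
      have tsB: "t - s \<le> 2 * B" using B[OF sJ] B[OF tJ] by linarith
      have "Ea t \<le> a * exp (\<gamma> * (2 * B))"
        unfolding Ea_def using apos gam tsB by (simp add: mult_left_mono)
      moreover have "\<phi> x + M2 * (t - s) \<le> \<Phi> + M2 * (2 * B)"
        using Phi[OF xR] M2pos tsB by (simp add: add_mono mult_left_mono)
      moreover have "\<phi> x + M2 * (t - s) \<ge> 0" using phipos[of x] M2pos st by simp
      moreover have "Ea t \<ge> 0" unfolding Ea_def using apos by simp
      ultimately have "Ea t * (\<phi> x + M2 * (t - s)) \<le> a * exp (\<gamma> * (2 * B)) * (\<Phi> + M2 * (2 * B))"
        by (intro mult_mono) auto
      with Ule aC have Ueps: "U t x \<le> \<epsilon>" unfolding C_def by (simp add: mult.assoc)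
      have gmeas_eq: "gmeas g t s x = density lborel (\<lambda>y. ennreal (g t s x y))"
        using False by (simp add: gmeas_def)
      have gm: "(\<lambda>y. ennreal (g t s x y)) \<in> borel_measurable lborel"
        by (rule measurable_compose[OF g_meas[OF sI ts] measurable_ennreal])
      have "emeasure (gmeas g t s x) (UNIV - ball 0 M) = (\<integral>\<^sup>+ y. ennreal (g t s x y) * indicator (UNIV - ball 0 M) y \<partial>lborel)"
        unfolding gmeas_eq by (rule emeasure_density[OF gm Aset])
      also have "\<dots> \<le> (\<integral>\<^sup>+ y. ennreal (g t s x y * f y) \<partial>lborel)"
      proof (rule nn_integral_mono)
        fix y :: "real^'d"
        show "ennreal (g t s x y) * indicator (UNIV - ball 0 M) y \<le> ennreal (g t s x y * f y)"
        proof (cases "y \<in> UNIV - ball 0 M")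
          case True
          then have "f y = 1" using f1[of y] by (simp add: dist_norm)
          then show ?thesis using True by simp
        next
          case False then show ?thesis by simp
        qed
      qed
      also have "\<dots> = ennreal (\<integral>y. g t s x y * f y \<partial>lborel)"
      proof (rule nn_integral_eq_integral)
        show "integrable lborel (\<lambda>y. g t s x y * f y)" using gg ts by blast
        show "AE y in lborel. 0 \<le> g t s x y * f y"
          using g_pos[OF sI ts] f0 by (intro AE_I2) (simp add: less_imp_le)
      qed
      also have "(\<integral>y. g t s x y * f y \<partial>lborel) = U t x" unfolding U_def using False by simp
      also have "ennreal (U t x) \<le> ennreal \<epsilon>" using Ueps by (rule ennreal_leI)
      finally show ?thesis .
    qed
  qed
qed


end
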